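(* Let $b,h,d\ge1$ be integers, let $D'$ be a digraph and $v\in V(D')$. Suppose that (1) every vertex of $D'$ reachable from $v$ has out-degree at least $(h+1)\cdot(d(2b-2)+1)+d$, and (2) the number of vertices of $D'$ at distance at most $(h+1)(2b-1)$ from $v$ is less than $d^h$. Then $D'$ contains a type-III gadget $G$ and a directed path $P_0$ from $v$ to $p(G)$ such that $V(P_0)\cap V(G)=\{p(G)\}$, $|V(G)|\le(2h+2)(2b-1)$ and $|V(P_0)|\le h(2b-1)$.
   Context: A gadget of type III (with parameter $b$) is a digraph consisting of designated vertices $p,q$, a vertex $r$, the arc $(p,q)$, and two internally vertex-disjoint directed paths $P_1,P_2$ from $p$ and from $q$ respectively to $r$, each of length at least $2b-1$; $p(G)$ denotes its vertex $p$. Distance from $v$ to $u$ means the length of a shortest directed $v$-$u$-path. *)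

theory Defs
  imports Main
begin

definition digraph :: "'a set \<Rightarrow> ('a \<times> 'a) set \<Rightarrow> bool" where
  "digraph V E \<longleftrightarrow> finite V \<and> E \<subseteq> V \<times> V \<and> (\<forall>x. (x, x) \<notin> E)"

definition dpath :: "'a set \<Rightarrow> ('a \<times> 'a) set \<Rightarrow> 'a list \<Rightarrow> bool" where
  "dpath V E P \<longleftrightarrow> P \<noteq> [] \<and> distinct P \<and> set P \<subseteq> V \<and>
     (\<forall>i. Suc i < length P \<longrightarrow> (P ! i, P ! Suc i) \<in> E)"

definition plen :: "'a list \<Rightarrow> nat" where
  "plen P = length P - 1"

definition out_degree :: "('a \<times> 'a) set \<Rightarrow> 'a \<Rightarrow> nat" where
  "out_degree E u = card {w. (u, w) \<in> E}"

definition reachable :: "'a set \<Rightarrow> ('a \<times> 'a) set \<Rightarrow> 'a \<Rightarrow> 'a \<Rightarrow> bool" where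
  "reachable V E v u \<longleftrightarrow> (\<exists>P. dpath V E P \<and> hd P = v \<and> last P = u)"

text \<open>Distance from v to u: length of a shortest directed v-u-path (only meaningful if
  u is reachable from v).\<close>
definition dist :: "'a set \<Rightarrow> ('a \<times> 'a) set \<Rightarrow> 'a \<Rightarrow> 'a \<Rightarrow> nat" where
  "dist V E v u = (LEAST n. \<exists>P. dpath V E P \<and> hd P = v \<and> last P = u \<and> plen P = n)"

definition ball_out :: "'a set \<Rightarrow> ('a \<times> 'a) set \<Rightarrow> 'a \<Rightarrow> nat \<Rightarrow> 'a set" where
  "ball_out V E v k = {u \<in> V. reachable V E v u \<and> dist V E v u \<le> k}"

text \<open>A type-III gadget with parameter b inside (V,E), given by the two paths
  P1 (from p) and P2 (from q) ending in the common vertex r; p = hd P1, q = hd P2,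
  and the arc (p,q) belongs to the gadget.\<close>
definition gadget_III :: "'a set \<Rightarrow> ('a \<times> 'a) set \<Rightarrow> nat \<Rightarrow> 'a list \<Rightarrow> 'a list \<Rightarrow> bool" where
  "gadget_III V E b P1 P2 \<longleftrightarrow>
     dpath V E P1 \<and> dpath V E P2 \<and> (hd P1, hd P2) \<in> E \<and>
     last P1 = last P2 \<and> set P1 \<inter> set P2 = {last P1} \<and>
     plen P1 \<ge> 2 * b - 1 \<and> plen P2 \<ge> 2 * b - 1"

definition gadget_vertices :: "'a list \<Rightarrow> 'a list \<Rightarrow> 'a set" where
  "gadget_vertices P1 P2 = set P1 \<union> set P2"

end

theory Submission
  imports Defs
begin

lemma dpath_take: "dpath V E P \<Longrightarrow> 0 < n \<Longrightarrow> dpath V E (take n P)"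
  unfolding dpath_def by (auto dest: in_set_takeD)

lemma dpath_drop: "dpath V E P \<Longrightarrow> n < length P \<Longrightarrow> dpath V E (drop n P)"
  unfolding dpath_def by (auto dest: in_set_dropD)

lemma dpath_snoc: "dpath V E P \<Longrightarrow> u \<in> V \<Longrightarrow> u \<notin> set P \<Longrightarrow> (last P, u) \<in> E
   \<Longrightarrow> dpath V E (P @ [u])"
  unfolding dpath_def
proof (intro conjI allI impI)
  fix i assume a: "P \<noteq> [] \<and> distinct P \<and> set P \<subseteq> V \<and> (\<forall>i. Suc i < length P \<longrightarrow> (P ! i, P ! Suc i) \<in> E)"
    "u \<in> V" "u \<notin> set P" "(last P, u) \<in> E" and i: "Suc i < length (P @ [u])"
  show "((P @ [u]) ! i, (P @ [u]) ! Suc i) \<in> E"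
  proof (cases "Suc i < length P")
    case True then show ?thesis using a by (simp add: nth_append)
  next
    case False
    then have "i = length P - 1" using i by simp
    then show ?thesis using a by (simp add: nth_append last_conv_nth)
  qed
qed (auto)

lemma common_prefix_exists:
  "\<exists>c. c \<le> length xs \<and> c \<le> length ys \<and> take c xs = take c ys \<and>
     (c = length xs \<or> c = length ys \<or> xs ! c \<noteq> ys ! c)"
proof (induction xs arbitrary: ys)
  case Nil then show ?case by auto
next
  case (Cons x xs)
  show ?case
  proof (cases ys)
    case Nil then show ?thesis by auto
  next
    case (Cons y ys')
    show ?thesis
    proof (cases "x = y")
      case False then show ?thesis using Cons by (intro exI[of _ 0]) auto
    next
      case True
      obtain c where "c \<le> length xs \<and> c \<le> length ys' \<and> take c xs = take c ys' \<and>
     (c = length xs \<or> c = length ys' \<or> xs ! c \<noteq> ys' ! c)" using Cons.IH by blast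
      then show ?thesis using Cons True by (intro exI[of _ "Suc c"]) auto
    qed
  qed
qed

definition children :: "'a list set \<Rightarrow> 'a list \<Rightarrow> 'a set" where
  "children T P = {u. P @ [u] \<in> T}"

definition SL :: "'a list set \<Rightarrow> 'a list \<Rightarrow> nat \<Rightarrow> 'a list set" where
  "SL T Q r = {P \<in> T. take (length Q) P = Q \<and> length P = length Q + r}"

locale L =
  fixes V :: "'a set" and E :: "('a \<times> 'a) set" and v :: 'a and b h d k :: nat
  assumes b1: "b \<ge> 1" and h1: "h \<ge> 1" and d1: "d \<ge> 1" and G: "digraph V E" and vV: "v \<in> V"
    and kdef: "k = 2*b - 1"
    and deg: "\<forall>u\<in>V. reachable V E v u \<longrightarrow> out_degree E u \<ge> (h+1)*(d*(k-1)+1)+d"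
    and ballc: "card (ball_out V E v ((h+1)*k)) < d^h"
begin

definition Goal :: bool where
  "Goal \<longleftrightarrow> (\<exists>P1 P2 P0. gadget_III V E b P1 P2 \<and>
           dpath V E P0 \<and> hd P0 = v \<and> last P0 = hd P1 \<and>
           set P0 \<inter> gadget_vertices P1 P2 = {hd P1} \<and>
           card (gadget_vertices P1 P2) \<le> (2 * h + 2) * (2 * b - 1) \<and>
           card (set P0) \<le> h * (2 * b - 1))"

definition cap :: "'a list \<Rightarrow> nat" where
  "cap P = (if k dvd (length P - 1) then d else 1)"

definition incomplete :: "'a list set \<Rightarrow> 'a list \<Rightarrow> bool" where
  "incomplete T P \<longleftrightarrow> length P < h*k+1 \<and> card (children T P) < cap P"

definition valid :: "'a list set \<Rightarrow> bool" where
  "valid T \<longleftrightarrow> finite T \<and> [v] \<in> T \<and> inj_on last T \<and>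
     (\<forall>P\<in>T. dpath V E P \<and> hd P = v \<and> length P \<le> h*k+1 \<and> card (children T P) \<le> cap P \<and>
        (\<forall>n>0. take n P \<in> T)) \<and>
     (\<forall>P\<in>T. k dvd (length P - 1) \<and> children T P \<noteq> {} \<longrightarrow>
        (\<forall>Q\<in>T. length Q < length P \<longrightarrow> \<not> incomplete T Q))"

lemma k1: "k \<ge> 1" using kdef b1 by simp

lemma vP: assumes "valid T" "P \<in> T"
  shows "dpath V E P" "hd P = v" "length P \<le> h*k+1" "card (children T P) \<le> cap P"
    "\<And>n. 0 < n \<Longrightarrow> take n P \<in> T" "P \<noteq> []" "distinct P" "set P \<subseteq> V"
  using assms unfolding valid_def dpath_def by blast+

lemma last_take_Suc: "i < length P \<Longrightarrow> last (take (Suc i) P) = P ! i"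
  by (simp add: take_Suc_conv_app_nth)

lemma nth_eq_take:
  assumes "valid T" "P \<in> T" "P' \<in> T" "i < length P" "i' < length P'" "P ! i = P' ! i'"
  shows "take (Suc i) P = take (Suc i') P'" "i = i'"
proof -
  have "take (Suc i) P \<in> T" "take (Suc i') P' \<in> T" using vP(5)[OF assms(1)] assms(2,3) by auto
  moreover have "last (take (Suc i) P) = last (take (Suc i') P')"
    using assms(4,5,6) by (simp add: last_take_Suc)
  moreover have "inj_on last T" using assms(1) unfolding valid_def by blast
  ultimately show 1: "take (Suc i) P = take (Suc i') P'" by (meson inj_onD)
  then have "length (take (Suc i) P) = length (take (Suc i') P')" by simp
  then show "i = i'" using assms(4,5) by simp
qed

lemma take_eq_nth: "take n xs = take n ys \<Longrightarrow> i < n \<Longrightarrow> xs ! i = ys ! i"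
  by (metis nth_take)

lemma gadget:
  assumes val: "valid T" and Pw: "Pw \<in> T" and Q: "Q \<in> T" and c1: "1 \<le> c"
    and lw: "c + k \<le> length Pw" and lq: "c + k \<le> length Q"
    and tk: "take c Pw = take c Q" and ne: "Pw ! c \<noteq> Q ! c"
    and ed: "(last Q, last Pw) \<in> E"
  shows Goal
proof -
  define w where "w = last Pw"
  define P1 where "P1 = drop (c-1) Pw"
  define P2 where "P2 = drop c Q @ [w]"
  define P0 where "P0 = take c Q"
  have k1: "k \<ge> 1" by (rule k1)
  have dPw: "dpath V E Pw" and dQ: "dpath V E Q" using vP val Pw Q by auto
  have dsPw: "distinct Pw" and dsQ: "distinct Q" using vP val Pw Q by auto
  have hPw: "length Pw \<le> h*k+1" and hQ: "length Q \<le> h*k+1" using vP val Pw Q by auto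
  have hdQ: "hd Q = v" using vP val Q by auto
  have wV: "w \<in> V" using ed G unfolding digraph_def w_def by auto
  have w_nth: "w = Pw ! (length Pw - 1)" 
  proof -
    have "Pw \<noteq> []" using lw k1 by auto
    then show ?thesis unfolding w_def by (simp add: last_conv_nth)
  qed
  have wQ: "w \<notin> set Q"
  proof
    assume "w \<in> set Q"
    then obtain j where j: "j < length Q" "Q ! j = w" by (auto simp: in_set_conv_nth)
    have "take (Suc (length Pw - 1)) Pw = take (Suc j) Q"
      using nth_eq_take(1)[OF val Pw Q, of "length Pw - 1" j] j w_nth lw k1 by simp
    then have "Pw = take (Suc j) Q" using lw k1 by simp
    then have "Pw ! c = Q ! c" using lw k1 by (simp add: nth_take)
    then show False using ne by simp
  qed
  have disj: "set P1 \<inter> set (drop c Q) = {}"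
  proof (rule ccontr)
    assume "set P1 \<inter> set (drop c Q) \<noteq> {}"
    then obtain u where u: "u \<in> set (drop (c-1) Pw)" "u \<in> set (drop c Q)" unfolding P1_def by auto
    then obtain i j where i: "i < length Pw - (c-1)" "Pw ! (c - 1 + i) = u"
        and j: "j < length Q - c" "Q ! (c + j) = u"
      by (auto simp: in_set_conv_nth)
    have "c - 1 + i = c + j" using nth_eq_take(2)[OF val Pw Q, of "c-1+i" "c+j"] i j by simp
    moreover have "take (Suc (c - 1 + i)) Pw = take (Suc (c+j)) Q"
      using nth_eq_take(1)[OF val Pw Q, of "c-1+i" "c+j"] i j by simp
    ultimately have "take (Suc c) (take (Suc (c - 1 + i)) Pw) = take (Suc c) (take (Suc (c+j)) Q)"
      by simp
    then have "take (Suc c) Pw = take (Suc c) Q" using \<open>c - 1 + i = c + j\<close> by (simp add: min_def)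
    then have "Pw ! c = Q ! c" by (rule take_eq_nth) simp
    then show False using ne by simp
  qed
  have hdP1: "hd P1 = Q ! (c-1)"
  proof -
    have "Pw ! (c-1) = Q ! (c-1)" using tk c1 by (intro take_eq_nth) auto
    then show ?thesis using lw c1 unfolding P1_def by (simp add: hd_drop_conv_nth)
  qed
  have hdP2: "hd P2 = Q ! c" using lq k1 unfolding P2_def by (simp add: hd_drop_conv_nth hd_append)
  have dP1: "dpath V E P1" unfolding P1_def using dPw lw c1 by (intro dpath_drop) auto
  have dP2: "dpath V E P2" unfolding P2_def
  proof (rule dpath_snoc)
    show "dpath V E (drop c Q)" using dQ lq k1 by (intro dpath_drop) auto
    show "w \<notin> set (drop c Q)" using wQ by (auto dest: in_set_dropD)
    show "(last (drop c Q), w) \<in> E" using ed lq k1 w_def by simp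
  qed (rule wV)
  have edge: "(hd P1, hd P2) \<in> E"
  proof -
    have "Suc (c-1) < length Q" using lq k1 c1 by simp
    then have "(Q ! (c-1), Q ! Suc (c-1)) \<in> E" using dQ unfolding dpath_def by blast
    then show ?thesis using hdP1 hdP2 c1 by simp
  qed
  have lP1: "last P1 = w" unfolding P1_def w_def using lw c1 k1 by simp
  have lP2: "last P2 = w" unfolding P2_def by simp
  have wP1: "w \<in> set P1" using lP1 dP1 unfolding dpath_def by auto
  have int: "set P1 \<inter> set P2 = {last P1}" using disj wP1 lP1 unfolding P2_def by auto
  have pl1: "plen P1 \<ge> 2*b-1" unfolding plen_def P1_def using lw kdef c1 by simp
  have pl2: "plen P2 \<ge> 2*b-1" unfolding plen_def P2_def using lq kdef by simp
  have gad: "gadget_III V E b P1 P2" unfolding gadget_III_def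
    using dP1 dP2 edge lP1 lP2 int pl1 pl2 by simp
  have dP0: "dpath V E P0" unfolding P0_def using dQ c1 by (intro dpath_take) auto
  have hP0: "hd P0 = v" unfolding P0_def using c1 hdQ by simp
  have lP0: "last P0 = hd P1"
  proof -
    have "c - 1 < length Q" using c1 lq by simp
    then have "last (take (Suc (c-1)) Q) = Q ! (c-1)" by (rule last_take_Suc)
    then show ?thesis unfolding P0_def using hdP1 c1 by simp
  qed
  have i02: "set P0 \<inter> set P2 = {}" unfolding P0_def P2_def
    using set_take_disj_set_drop_if_distinct[OF dsQ, of c c] wQ by (auto dest: in_set_takeD)
  have i01: "set P0 \<inter> set P1 = {hd P1}"
  proof
    show "set P0 \<inter> set P1 \<subseteq> {hd P1}"
    proof
      fix u assume "u \<in> set P0 \<inter> set P1"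
      then have u: "u \<in> set (take c Pw)" "u \<in> set (drop (c-1) Pw)" unfolding P0_def P1_def
        using tk by auto
      then obtain i j where i: "i < c" "i < length Pw" "Pw ! i = u"
        and j: "j < length Pw - (c-1)" "Pw ! (c - 1 + j) = u"
        by (auto simp: in_set_conv_nth)
      have "c - 1 + j < length Pw" using j by simp
      then have "i = c - 1 + j" using i j dsPw nth_eq_iff_index_eq by metis
      then have "i = c - 1" using i by simp
      moreover have "Pw ! (c-1) = Q ! (c-1)" using tk c1 by (intro take_eq_nth) auto
      ultimately show "u \<in> {hd P1}" using i hdP1 by simp
    qed
    show "{hd P1} \<subseteq> set P0 \<inter> set P1"
      using lP0 dP0 dP1 unfolding dpath_def by (metis IntI empty_subsetI insert_subset last_in_set hd_in_set)
  qed
  have c0: "card (gadget_vertices P1 P2) \<le> (2 * h + 2) * (2 * b - 1)"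
  proof -
    have "card (gadget_vertices P1 P2) \<le> card (set P1) + card (set P2)"
      unfolding gadget_vertices_def by (rule card_Un_le)
    also have "\<dots> \<le> length P1 + length P2" by (intro add_mono card_length)
    also have "\<dots> = (length Pw - (c-1)) + (length Q - c + 1)" unfolding P1_def P2_def by simp
    also have "\<dots> \<le> (2*h+2)*k" using hPw hQ c1 lw lq k1 by (simp add: algebra_simps)
    finally show ?thesis using kdef by simp
  qed
  have c1': "card (set P0) \<le> h * (2 * b - 1)"
  proof -
    have "card (set P0) \<le> length P0" by (rule card_length)
    also have "\<dots> \<le> c" unfolding P0_def by simp
    also have "\<dots> \<le> h*k" using lq hQ k1 by simp
    finally show ?thesis using kdef by simp
  qed
  show Goal unfolding Goal_def
    apply (rule exI[of _ P1], rule exI[of _ P2], rule exI[of _ P0])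
    using gad dP0 hP0 lP0 i01 i02 c0 c1' unfolding gadget_vertices_def by auto
qed


lemma SL_0: assumes "valid T" "Q \<in> T" shows "SL T Q 0 = {Q}"
proof -
  have "P = Q" if "take (length Q) P = Q" "length P = length Q" for P :: "'a list"
    using that by (metis take_all order_refl)
  then show ?thesis using assms unfolding SL_def by auto
qed

lemma children_finite: assumes "valid T" shows "finite (children T P)"
proof -
  have "children T P \<subseteq> last ` T" unfolding children_def by (force)
  moreover have "finite T" using assms unfolding valid_def by blast
  ultimately show ?thesis by (meson finite_imageI finite_subset)
qed

lemma SL_finite: assumes "valid T" shows "finite (SL T Q r)"
  using assms unfolding valid_def SL_def by auto

lemma SL_Suc_eq: assumes val: "valid T" and Q: "Q \<in> T"
  shows "SL T Q (Suc r) = (\<Union>P\<in>SL T Q r. (\<lambda>u. P @ [u]) ` children T P)"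
proof
  have Qne: "Q \<noteq> []" using vP(6)[OF val Q] .
  show "SL T Q (Suc r) \<subseteq> (\<Union>P\<in>SL T Q r. (\<lambda>u. P @ [u]) ` children T P)"
  proof
    fix P' assume P': "P' \<in> SL T Q (Suc r)"
    then have P'T: "P' \<in> T" and tq: "take (length Q) P' = Q" and lP': "length P' = length Q + Suc r"
      unfolding SL_def by auto
    have ne: "P' \<noteq> []" using lP' by auto
    define P where "P = butlast P'"
    have eq: "P' = P @ [last P']" unfolding P_def using ne by simp
    have "P = take (length P' - 1) P'" unfolding P_def by (simp add: butlast_conv_take)
    moreover have "length P' - 1 > 0" using lP' Qne by (cases Q) auto
    ultimately have PT: "P \<in> T" using vP(5)[OF val P'T] by simp
    have lP: "length P = length Q + r" using lP' unfolding P_def by simp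
    have "take (length Q) P = Q" using tq eq lP by (metis le_add1 take_append take_all_iff append_Nil2 diff_is_0_eq' take_0 append_take_drop_id take_take) 
    then have "P \<in> SL T Q r" using PT lP unfolding SL_def by simp
    moreover have "last P' \<in> children T P" unfolding children_def using eq P'T by simp
    ultimately show "P' \<in> (\<Union>P\<in>SL T Q r. (\<lambda>u. P @ [u]) ` children T P)" using eq by blast
  qed
  show "(\<Union>P\<in>SL T Q r. (\<lambda>u. P @ [u]) ` children T P) \<subseteq> SL T Q (Suc r)"
    unfolding SL_def children_def by auto
qed

lemma SL_Suc: assumes val: "valid T" and Q: "Q \<in> T"
  shows "card (SL T Q (Suc r)) = (\<Sum>P\<in>SL T Q r. card (children T P))"
proof -
  have "card (SL T Q (Suc r)) = card (\<Union>P\<in>SL T Q r. (\<lambda>u. P @ [u]) ` children T P)"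
    using SL_Suc_eq[OF val Q] by simp
  also have "\<dots> = (\<Sum>P\<in>SL T Q r. card ((\<lambda>u. P @ [u]) ` children T P))"
    by (rule card_UN_disjoint) (auto simp: SL_finite[OF val] children_finite[OF val])
  also have "\<dots> = (\<Sum>P\<in>SL T Q r. card (children T P))"
    by (intro sum.cong refl card_image) (auto simp: inj_on_def)
  finally show ?thesis .
qed


lemma SL_upper_aux: assumes val: "valid T" and Q: "Q \<in> T" and dv: "k dvd (length Q - 1)"
  shows "Suc r \<le> k \<Longrightarrow> card (SL T Q (Suc r)) \<le> d"
proof (induction r)
  case 0
  have "card (SL T Q (Suc 0)) = card (children T Q)" using SL_Suc[OF val Q, of 0] SL_0[OF val Q] by simp
  also have "\<dots> \<le> cap Q" using vP(4)[OF val Q] .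
  also have "\<dots> = d" unfolding cap_def using dv by simp
  finally show ?case .
next
  case (Suc r)
  have Qne: "length Q \<ge> 1" using vP(6)[OF val Q] by (cases Q) auto
  have "card (SL T Q (Suc (Suc r))) = (\<Sum>P\<in>SL T Q (Suc r). card (children T P))"
    by (rule SL_Suc[OF val Q])
  also have "\<dots> \<le> (\<Sum>P\<in>SL T Q (Suc r). 1)"
  proof (rule sum_mono)
    fix P assume P: "P \<in> SL T Q (Suc r)"
    then have PT: "P \<in> T" and lP: "length P = length Q + Suc r" unfolding SL_def by auto
    have "\<not> k dvd (length P - 1)"
    proof
      assume "k dvd (length P - 1)"
      moreover have "length P - 1 = (length Q - 1) + Suc r" using lP Qne by simp
      ultimately have "k dvd (length Q - 1) + Suc r" by metis
      then have "k dvd Suc r" using dvd_add_right_iff[OF dv] by blast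
      then show False using Suc.prems by (simp add: nat_dvd_not_less)
    qed
    then show "card (children T P) \<le> 1" using vP(4)[OF val PT] unfolding cap_def by simp
  qed
  also have "\<dots> = card (SL T Q (Suc r))" by simp
  also have "\<dots> \<le> d" using Suc by simp
  finally show ?case .
qed

lemma SL_upper: assumes "valid T" "Q \<in> T" "k dvd (length Q - 1)" "1 \<le> r" "r \<le> k"
  shows "card (SL T Q r) \<le> d"
  using SL_upper_aux[OF assms(1-3), of "r - 1"] assms(4,5) by simp

lemma SL_lower_step: assumes val: "valid T" and comp: "\<forall>P\<in>T. \<not> incomplete T P" and n: "n < h*k"
  shows "card (SL T [v] n) * (if k dvd n then d else 1) \<le> card (SL T [v] (Suc n))"
proof -
  have vT: "[v] \<in> T" using val unfolding valid_def by blast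
  have "card (SL T [v] n) * (if k dvd n then d else 1) \<le> (\<Sum>P\<in>SL T [v] n. card (children T P))"
  proof -
   have "of_nat (card (SL T [v] n)) * (if k dvd n then d else 1) \<le> (\<Sum>P\<in>SL T [v] n. card (children T P))"
   proof (rule sum_bounded_below)
    fix P assume P: "P \<in> SL T [v] n"
    then have PT: "P \<in> T" and lP: "length P = Suc n" unfolding SL_def by auto
    have "\<not> incomplete T P" using comp PT by blast
    then show "(if k dvd n then d else 1) \<le> card (children T P)"
      using lP n unfolding incomplete_def cap_def by auto
   qed
   then show ?thesis by simp
  qed
  also have "\<dots> = card (SL T [v] (Suc n))" using SL_Suc[OF val vT] by simp
  finally show ?thesis .
qed

lemma SL_lower: assumes val: "valid T" and comp: "\<forall>P\<in>T. \<not> incomplete T P"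
  shows "j \<le> h \<Longrightarrow> d ^ j \<le> card (SL T [v] (j*k))"
proof (induction j)
  case 0
  have vT: "[v] \<in> T" using val unfolding valid_def by blast
  show ?case using SL_0[OF val vT] by simp
next
  case (Suc j)
  have k1: "k \<ge> 1" by (rule k1)
  have IH: "d ^ j \<le> card (SL T [v] (j*k))" using Suc by simp
  have step: "Suc r \<le> k \<Longrightarrow> d * card (SL T [v] (j*k)) \<le> card (SL T [v] (j*k + Suc r))" for r
  proof (induction r)
    case 0
    have "j*k < h*k" using Suc.prems k1 by simp
    then show ?case using SL_lower_step[OF val comp, of "j*k"] by (simp add: mult.commute)
  next
    case (Suc r)
    have lt: "j*k + Suc r < h*k"
    proof -
      have "j*k + Suc r < j*k + k" using Suc.prems by simp
      also have "\<dots> = Suc j * k" by simp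
      also have "\<dots> \<le> h*k" using \<open>Suc j \<le> h\<close> by (rule mult_le_mono1)
      finally show ?thesis .
    qed
    have nd: "\<not> k dvd (j*k + Suc r)"
    proof
      assume "k dvd (j*k + Suc r)"
      then have "k dvd Suc r" using dvd_add_right_iff[of k "j*k" "Suc r"] by simp
      then show False using Suc.prems by (simp add: nat_dvd_not_less)
    qed
    have "card (SL T [v] (j*k + Suc r)) \<le> card (SL T [v] (Suc (j*k + Suc r)))"
      using SL_lower_step[OF val comp lt] nd by simp
    then show ?case using Suc by simp
  qed
  have "d ^ Suc j = d * d ^ j" by simp
  also have "\<dots> \<le> d * card (SL T [v] (j*k))" using IH by simp
  also have "\<dots> \<le> card (SL T [v] (j*k + Suc (k - 1)))" using step[of "k-1"] k1 by simp
  also have "j*k + Suc (k - 1) = Suc j * k" using k1 by simp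
  finally show ?case .
qed

lemma complete_False: assumes val: "valid T" and comp: "\<forall>P\<in>T. \<not> incomplete T P"
  shows False
proof -
  have "d ^ h \<le> card (SL T [v] (h*k))" using SL_lower[OF val comp] by simp
  also have "\<dots> = card (last ` SL T [v] (h*k))"
  proof -
    have "inj_on last T" using val unfolding valid_def by blast
    then have "inj_on last (SL T [v] (h*k))" by (rule inj_on_subset) (auto simp: SL_def)
    then show ?thesis by (simp add: card_image)
  qed
  also have "\<dots> \<le> card (ball_out V E v ((h+1)*k))"
  proof (rule card_mono)
    show "finite (ball_out V E v ((h+1)*k))" using G unfolding digraph_def ball_out_def by auto
    show "last ` SL T [v] (h*k) \<subseteq> ball_out V E v ((h+1)*k)"
    proof
      fix u assume "u \<in> last ` SL T [v] (h*k)"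
      then obtain P where P: "P \<in> T" "length P = Suc (h*k)" "u = last P" unfolding SL_def by auto
      have dp: "dpath V E P" and hP: "hd P = v" using vP[OF val P(1)] by auto
      have uV: "u \<in> V" using dp P(3) unfolding dpath_def by auto
      have r: "reachable V E v u" unfolding reachable_def using dp hP P(3) by blast
      have "dist V E v u \<le> h*k" unfolding dist_def
        by (rule Least_le) (use dp hP P in \<open>auto simp: plen_def\<close>)
      also have "\<dots> \<le> (h+1)*k" by simp
      finally show "u \<in> ball_out V E v ((h+1)*k)" unfolding ball_out_def using uV r by simp
    qed
  qed
  finally show False using ballc by simp
qed


lemma set_path_in_T: assumes val: "valid T" and Q: "Q \<in> T" shows "set Q \<subseteq> last ` T"
proof
  fix x assume "x \<in> set Q"
  then obtain i where i: "i < length Q" "Q ! i = x" by (auto simp: in_set_conv_nth)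
  have "take (Suc i) Q \<in> T" using vP(5)[OF val Q] by simp
  moreover have "last (take (Suc i) Q) = x" using i by (simp add: last_take_Suc)
  ultimately show "x \<in> last ` T" by (metis image_eqI)
qed

lemma extend:
  assumes val: "valid T" and Q: "Q \<in> T" and inc: "incomplete T Q"
    and minQ: "\<forall>Q'\<in>T. incomplete T Q' \<longrightarrow> length Q \<le> length Q'"
    and ed: "(last Q, u) \<in> E" and uT: "u \<notin> last ` T"
  shows "valid (insert (Q @ [u]) T)" "Q @ [u] \<notin> T"
proof -
  define T' where "T' = insert (Q @ [u]) T"
  show nT: "Q @ [u] \<notin> T"
  proof
    assume "Q @ [u] \<in> T"
    then have "last (Q @ [u]) \<in> last ` T" by blast
    then show False using uT by simp
  qed
  have uQ: "u \<notin> set Q" using set_path_in_T[OF val Q] uT by blast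
  have uV: "u \<in> V" using ed G unfolding digraph_def by auto
  have ch: "children T' P = (if P = Q then insert u (children T Q) else children T P)" for P
    unfolding T'_def children_def by auto
  have chu: "children T (Q @ [u]) = {}"
  proof (rule ccontr)
    assume "children T (Q @ [u]) \<noteq> {}"
    then obtain x where "Q @ [u] @ [x] \<in> T" unfolding children_def by auto
    then have "take (Suc (length Q)) (Q @ [u] @ [x]) \<in> T" using vP(5)[OF val] by blast
    then show False using nT by simp
  qed
  have uch: "u \<notin> children T Q" using nT unfolding children_def by simp
  have incT': "incomplete T' Q' = incomplete T Q'" if "Q' \<noteq> Q" for Q'
    using that ch unfolding incomplete_def by simp
  have lQ: "length Q < h*k+1" and cQ: "card (children T Q) < cap Q" using inc unfolding incomplete_def by auto
  have finT: "finite T" using val unfolding valid_def by blast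
  have P1: "dpath V E P \<and> hd P = v \<and> length P \<le> h*k+1 \<and> card (children T' P) \<le> cap P \<and>
        (\<forall>n>0. take n P \<in> T')" if P: "P \<in> T'" for P
  proof (cases "P = Q @ [u]")
    case True
    have "dpath V E (Q @ [u])" using dpath_snoc[OF vP(1)[OF val Q] uV uQ ed] .
    moreover have "hd (Q @ [u]) = v" using vP(2,6)[OF val Q] by simp
    moreover have "length (Q @ [u]) \<le> h*k+1" using lQ by simp
    moreover have "children T' (Q @ [u]) = {}" using ch chu by simp
    moreover have "take n (Q @ [u]) \<in> T'" if "n > 0" for n
    proof (cases "n \<le> length Q")
      case True then show ?thesis using vP(5)[OF val Q that] unfolding T'_def by simp
    next
      case False then show ?thesis unfolding T'_def by simp
    qed
    ultimately show ?thesis using True by simp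
  next
    case False
    then have PT: "P \<in> T" using P unfolding T'_def by simp
    have "card (children T' P) \<le> cap P"
    proof (cases "P = Q")
      case True
      have "card (children T' P) = Suc (card (children T Q))"
        using ch True uch children_finite[OF val] by simp
      then show ?thesis using cQ True by simp
    next
      case False then show ?thesis using ch vP(4)[OF val PT] by simp
    qed
    moreover have "take n P \<in> T'" if "n > 0" for n using vP(5)[OF val PT that] unfolding T'_def by simp
    ultimately show ?thesis using vP(1-3)[OF val PT] by blast
  qed
  have P2: "\<not> incomplete T' Q'" if P: "P \<in> T'" and dv: "k dvd (length P - 1)" and ne: "children T' P \<noteq> {}"
     and Q': "Q' \<in> T'" and lt: "length Q' < length P" for P Q'
  proof -
    have PQu: "P \<noteq> Q @ [u]" using ne ch chu by auto
    then have PT: "P \<in> T" using P unfolding T'_def by simp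
    have lPQ: "length P \<le> length Q"
    proof (cases "P = Q")
      case False
      then have "children T P \<noteq> {}" using ne ch by simp
      then have "\<forall>Q''\<in>T. length Q'' < length P \<longrightarrow> \<not> incomplete T Q''"
        using val PT dv unfolding valid_def by blast
      then show ?thesis using Q inc by (meson not_less)
    qed simp
    then have Q'T: "Q' \<in> T" and Q'Q: "Q' \<noteq> Q" using Q' lt unfolding T'_def by auto
    show ?thesis
    proof (cases "P = Q")
      case True
      then have "\<not> incomplete T Q'" using minQ Q'T lt by (meson not_less)
      then show ?thesis using incT' Q'Q by simp
    next
      case False
      then have "children T P \<noteq> {}" using ne ch by simp
      then have "\<not> incomplete T Q'" using val PT dv Q'T lt unfolding valid_def by blast
      then show ?thesis using incT' Q'Q by simp
    qed
  qed
  have "inj_on last T'"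
  proof -
    have "inj_on last T" using val unfolding valid_def by blast
    moreover have "last (Q @ [u]) \<notin> last ` (T - {Q @ [u]})" using uT by auto
    ultimately show ?thesis unfolding T'_def by (simp only: inj_on_insert) blast
  qed
  moreover have "finite T'" "[v] \<in> T'" using finT val unfolding T'_def valid_def by auto
  ultimately show "valid (insert (Q @ [u]) T)" unfolding T'_def[symmetric] valid_def
    using P1 P2 by (intro conjI ballI impI allI) auto
qed


lemma sum_SL_bound: assumes val: "valid T" and Y: "Y \<in> T" and dv: "k dvd (length Y - 1)" and n: "n \<le> k"
  shows "card (\<Union>r\<in>{..<Suc n}. SL T Y r) \<le> 1 + n * d"
proof -
  have "card (\<Union>r\<in>{..<Suc n}. SL T Y r) \<le> (\<Sum>r\<in>{..<Suc n}. card (SL T Y r))"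
    by (rule card_UN_le) simp
  also have "\<dots> = card (SL T Y 0) + (\<Sum>r\<in>{..<n}. card (SL T Y (Suc r)))"
    by (rule sum.lessThan_Suc_shift)
  also have "\<dots> \<le> 1 + (\<Sum>r\<in>{..<n}. d)"
  proof (intro add_mono sum_mono)
    show "card (SL T Y 0) \<le> 1" using SL_0[OF val Y] by simp
    fix r assume "r \<in> {..<n}"
    then show "card (SL T Y (Suc r)) \<le> d" using SL_upper[OF val Y dv, of "Suc r"] n by simp
  qed
  also have "\<dots> = 1 + n * d" by simp
  finally show ?thesis .
qed

lemma failure:
  assumes val: "valid T" and Q: "Q \<in> T" and inc: "incomplete T Q"
    and allin: "\<forall>u. (last Q, u) \<in> E \<longrightarrow> u \<in> last ` T"
  shows Goal
proof (rule ccontr)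
  assume nG: "\<not> Goal"
  have k1: "k \<ge> 1" by (rule k1)
  have Qne: "Q \<noteq> []" and dQ: "dpath V E Q" and hQ: "hd Q = v" using vP[OF val Q] by auto
  have lQ: "length Q < h*k+1" using inc unfolding incomplete_def by simp
  define dz where "dz = length Q - 1"
  define m where "m = dz div k"
  define a where "a = m * k"
  define X where "X = take (a+1) Q"
  define Y where "Y j = take (j*k+1) Q" for j
  define B where "B = (\<Union>r\<in>{..<Suc k}. SL T X r) \<union> (\<Union>j\<in>{..<m}. \<Union>r\<in>{..<Suc (k-1)}. SL T (Y j) r)"
  have lQdz: "length Q = dz + 1" unfolding dz_def using Qne by (cases Q) auto
  have adz: "a \<le> dz" unfolding a_def m_def by (rule div_times_less_eq_dividend)
  have dza: "dz < a + k"
  proof -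
    have "dz = m * k + dz mod k" unfolding m_def by simp
    moreover have "dz mod k < k" using k1 by simp
    ultimately show ?thesis unfolding a_def by linarith
  qed
  have mh: "m < h"
  proof (rule ccontr)
    assume "\<not> m < h"
    then have "h * k \<le> m * k" by (intro mult_le_mono1) simp
    then show False using adz lQ lQdz unfolding a_def by linarith
  qed
  have XT: "X \<in> T" unfolding X_def using vP(5)[OF val Q] by simp
  have lX: "length X = a + 1" unfolding X_def using adz lQdz by simp
  have dvX: "k dvd (length X - 1)" using lX unfolding a_def by simp
  have YT: "Y j \<in> T" for j unfolding Y_def using vP(5)[OF val Q] by simp
  have lY: "length (Y j) = j*k + 1" if "j < m" for j
  proof -
    have "j * k \<le> a" using that unfolding a_def by simp
    then show ?thesis unfolding Y_def using adz lQdz by simp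
  qed
  have dvY: "k dvd (length (Y j) - 1)" if "j < m" for j using lY[OF that] by simp
  define A where "A = 1 + (k-1)*d"
  have cB: "card B \<le> (A + d) + m * A"
  proof -
    have "card B \<le> card (\<Union>r\<in>{..<Suc k}. SL T X r) + card (\<Union>j\<in>{..<m}. \<Union>r\<in>{..<Suc (k-1)}. SL T (Y j) r)"
      unfolding B_def by (rule card_Un_le)
    also have "\<dots> \<le> (1 + k*d) + (\<Sum>j\<in>{..<m}. card (\<Union>r\<in>{..<Suc (k-1)}. SL T (Y j) r))"
      by (intro add_mono sum_SL_bound[OF val XT dvX] card_UN_le) auto
    also have "\<dots> \<le> (1 + k*d) + (\<Sum>j\<in>{..<m}. A)"
    proof (intro add_mono order_refl sum_mono)
      fix j assume "j \<in> {..<m}"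
      then have "j < m" by simp
      then show "card (\<Union>r\<in>{..<Suc (k-1)}. SL T (Y j) r) \<le> A"
        unfolding A_def by (intro sum_SL_bound[OF val YT dvY]) auto
    qed
    also have "\<dots> = (A + d) + m * A" unfolding A_def using k1
      by (simp add: algebra_simps)
    finally show ?thesis .
  qed
  have z_deg: "out_degree E (last Q) \<ge> (h+1)*A + d"
  proof -
    have "last Q \<in> V" using dQ Qne unfolding dpath_def by auto
    moreover have "reachable V E v (last Q)" unfolding reachable_def using dQ hQ by blast
    ultimately show ?thesis using deg unfolding A_def by (simp add: mult.commute)
  qed
  have cB2: "card B < out_degree E (last Q)"
  proof -
    have "m * A \<le> (h - 1) * A" using mh by (intro mult_le_mono1) simp
    then have "card B \<le> A + d + (h-1) * A" using cB by linarith
    also have "\<dots> = h * A + d" using h1 by (cases h) auto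
    also have "\<dots> < (h+1)*A + d" unfolding A_def by simp
    finally show ?thesis using z_deg by simp
  qed
  have sub: "{w. (last Q, w) \<in> E} \<subseteq> last ` B"
  proof
    fix w assume "w \<in> {w. (last Q, w) \<in> E}"
    then have ed: "(last Q, w) \<in> E" by simp
    then obtain Pw where Pw: "Pw \<in> T" "last Pw = w" using allin by blast
    have Pwne: "Pw \<noteq> []" and hPw: "hd Pw = v" using vP[OF val Pw(1)] by auto
    obtain c where c: "c \<le> length Pw" "c \<le> length Q" "take c Pw = take c Q"
      "c = length Pw \<or> c = length Q \<or> Pw ! c \<noteq> Q ! c" using common_prefix_exists by blast
    have c1: "c \<ge> 1"
    proof (rule ccontr)
      assume "\<not> c \<ge> 1"
      then have "c = 0" by simp
      moreover have "Pw ! 0 = Q ! 0" using hPw hQ Pwne Qne by (simp add: hd_conv_nth)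
      ultimately show False using c(4) Pwne Qne by simp
    qed
    have "Pw \<in> B"
    proof (cases "c \<ge> a + 1")
      case True
      have tX: "take (a+1) Pw = X"
      proof -
        have "take (a+1) (take c Pw) = take (a+1) (take c Q)" using c(3) by simp
        then show ?thesis unfolding X_def using True by (simp add: min_def)
      qed
      have lPw: "length Pw \<le> a + k + 1"
      proof (rule ccontr)
        assume "\<not> length Pw \<le> a + k + 1"
        then have lt: "a + k + 1 < length Pw" by simp
        define P' where "P' = take (a+k+1) Pw"
        have P'T: "P' \<in> T" unfolding P'_def using vP(5)[OF val Pw(1)] by simp
        have lP': "length P' = a + k + 1" unfolding P'_def using lt by simp
        have "take (Suc (a+k+1)) Pw = P' @ [Pw ! (a+k+1)]" unfolding P'_def using lt
          by (rule take_Suc_conv_app_nth)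
        moreover have "take (Suc (a+k+1)) Pw \<in> T" using vP(5)[OF val Pw(1)] by simp
        ultimately have "children T P' \<noteq> {}" unfolding children_def by auto
        moreover have "k dvd (length P' - 1)" using lP' unfolding a_def by simp
        ultimately have "\<forall>Q'\<in>T. length Q' < length P' \<longrightarrow> \<not> incomplete T Q'"
          using val P'T unfolding valid_def by blast
        moreover have "length Q < length P'" using lP' lQdz dza by simp
        ultimately show False using Q inc by blast
      qed
      have "Pw \<in> SL T X (length Pw - (a+1))" unfolding SL_def using Pw(1) tX lX True c(1) by simp
      moreover have "length Pw - (a+1) < Suc k" using lPw by simp
      ultimately show ?thesis unfolding B_def by blast
    next
      case False
      then have ca: "c \<le> a" by simp
      define j where "j = (c - 1) div k"
      have jk: "j * k \<le> c - 1" unfolding j_def by (rule div_times_less_eq_dividend)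
      have jk2: "c - 1 < j * k + k"
      proof -
        have "c - 1 = j * k + (c - 1) mod k" unfolding j_def by simp
        moreover have "(c - 1) mod k < k" using k1 by simp
        ultimately show ?thesis by linarith
      qed
      have jm: "j < m"
      proof (rule ccontr)
        assume "\<not> j < m"
        then have "m * k \<le> j * k" by (intro mult_le_mono1) simp
        then show False using jk ca c1 unfolding a_def by linarith
      qed
      have tY: "take (j*k+1) Pw = Y j"
      proof -
        have "take (j*k+1) (take c Pw) = take (j*k+1) (take c Q)" using c(3) by simp
        moreover have "j*k+1 \<le> c" using jk c1 by linarith
        ultimately show ?thesis unfolding Y_def by (simp add: min_def)
      qed
      have inY: "Pw \<in> B" if "length Pw \<le> j*k + k" "j*k + 1 \<le> length Pw"
      proof -
        have "Pw \<in> SL T (Y j) (length Pw - (j*k+1))" unfolding SL_def using Pw(1) tY lY[OF jm] that by simp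
        moreover have "length Pw - (j*k+1) < Suc (k-1)" using that k1 by simp
        ultimately show ?thesis unfolding B_def using jm by blast
      qed
      consider "c = length Pw" | "c = length Q" | "c < length Pw" "c < length Q" "Pw ! c \<noteq> Q ! c"
        using c by linarith
      then show ?thesis
      proof cases
        case 1 then show ?thesis using inY jk jk2 c1 by simp
      next
        case 2 then show ?thesis using ca adz lQdz by simp
      next
        case 3
        define P where "P = take c Q"
        have PT: "P \<in> T" unfolding P_def using vP(5)[OF val Q] c1 by simp
        have lP: "length P = c" unfolding P_def using c(2) by simp
        have "take (Suc c) Pw = take c Pw @ [Pw ! c]" using 3(1) by (rule take_Suc_conv_app_nth)
        then have "take (Suc c) Pw = P @ [Pw ! c]" unfolding P_def using c(3) by simp
        moreover have "take (Suc c) Q = P @ [Q ! c]" unfolding P_def using 3(2)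
          by (rule take_Suc_conv_app_nth)
        moreover have "take (Suc c) Pw \<in> T" "take (Suc c) Q \<in> T"
          using vP(5)[OF val Pw(1)] vP(5)[OF val Q] by auto
        ultimately have "{Pw ! c, Q ! c} \<subseteq> children T P" unfolding children_def by auto
        then have "card {Pw ! c, Q ! c} \<le> card (children T P)"
          by (rule card_mono[OF children_finite[OF val]])
        then have "2 \<le> cap P" using vP(4)[OF val PT] 3 by simp
        then have dvc: "k dvd (c - 1)" unfolding cap_def lP by (simp split: if_splits)
        then have cj: "c - 1 = j * k" unfolding j_def by simp
        show ?thesis
        proof (cases "length Pw \<le> j*k + k")
          case True then show ?thesis using inY 3 cj by simp
        next
          case False
          have "c + k \<le> length Pw" using False cj c1 by simp
          moreover have "c + k \<le> length Q"
          proof -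
            have "(j + 1) * k \<le> m * k" using jm by (intro mult_le_mono1) simp
            then show ?thesis using cj c1 lQdz adz unfolding a_def by simp
          qed
          ultimately have Goal using gadget[OF val Pw(1) Q c1 _ _ c(3) 3(3)] ed Pw(2) by simp
          then show ?thesis using nG by simp
        qed
      qed
    qed
    then show "w \<in> last ` B" using Pw(2) by blast
  qed
  have "out_degree E (last Q) \<le> card (last ` B)"
    unfolding out_degree_def
  proof (rule card_mono[OF _ sub])
    have "finite B" unfolding B_def using SL_finite[OF val] by auto
    then show "finite (last ` B)" by simp
  qed
  also have "\<dots> \<le> card B" by (rule card_image_le) (auto simp: B_def SL_finite[OF val])
  finally show False using cB2 by simp
qed


lemma card_T_le: assumes val: "valid T" shows "card T \<le> card V"
proof -
  have "card T = card (last ` T)" using val unfolding valid_def by (simp add: card_image)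
  also have "\<dots> \<le> card V"
  proof (rule card_mono)
    show "finite V" using G unfolding digraph_def by simp
    show "last ` T \<subseteq> V"
    proof
      fix x assume "x \<in> last ` T"
      then obtain P where "P \<in> T" "x = last P" by blast
      then show "x \<in> V" using vP(6,8)[OF val] by (meson last_in_set subsetD)
    qed
  qed
  finally show ?thesis .
qed

lemma main: "valid T \<Longrightarrow> Goal"
proof (induction "Suc (card V) - card T" arbitrary: T rule: less_induct)
  case less
  show ?case
  proof (cases "\<forall>P\<in>T. \<not> incomplete T P")
    case True then show ?thesis using complete_False[OF less.prems] by simp
  next
    case False
    then obtain Q0 where "Q0 \<in> T \<and> incomplete T Q0" by blast
    then obtain Q where Q: "Q \<in> T \<and> incomplete T Q"
      and minQ: "\<forall>Q'. Q' \<in> T \<and> incomplete T Q' \<longrightarrow> length Q \<le> length Q'"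
      using ex_has_least_nat[of "\<lambda>Q. Q \<in> T \<and> incomplete T Q" Q0 length] by blast
    show ?thesis
    proof (cases "\<forall>u. (last Q, u) \<in> E \<longrightarrow> u \<in> last ` T")
      case True then show ?thesis using failure[OF less.prems] Q by blast
    next
      case False
      then obtain u where u: "(last Q, u) \<in> E" "u \<notin> last ` T" by blast
      have minQ': "\<forall>Q'\<in>T. incomplete T Q' \<longrightarrow> length Q \<le> length Q'" using minQ by blast
      have v': "valid (insert (Q @ [u]) T)" and nT: "Q @ [u] \<notin> T"
        using extend[OF less.prems _ _ minQ' u] Q by auto
      have fT: "finite T" using less.prems unfolding valid_def by blast
      have "card (insert (Q @ [u]) T) = Suc (card T)" using fT nT by simp
      moreover have "card (insert (Q @ [u]) T) \<le> card V" using card_T_le[OF v'] .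
      ultimately have "Suc (card V) - card (insert (Q @ [u]) T) < Suc (card V) - card T" by simp
      then show ?thesis using less.hyps v' by blast
    qed
  qed
qed

lemma valid_init: "valid {[v]}"
proof -
  have ch: "children {[v]} [v] = {}" unfolding children_def by auto
  have tk: "take n [v] = [v]" if "n > 0" for n using that by (cases n) auto
  have dp: "dpath V E [v]" unfolding dpath_def using vV by simp
  show ?thesis unfolding valid_def using ch tk dp by auto
qed

theorem Goal_holds: Goal using main[OF valid_init] .

end

theorem lemma2p11:
  fixes V :: "'a set" and E :: "('a \<times> 'a) set" and v :: 'a and b h d :: nat
  assumes "b \<ge> 1" and "h \<ge> 1" and "d \<ge> 1"
    and "digraph V E" and "v \<in> V"
    and "\<forall>u \<in> V. reachable V E v u \<longrightarrow>
           out_degree E u \<ge> (h + 1) * (d * (2 * b - 2) + 1) + d"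
    and "card (ball_out V E v ((h + 1) * (2 * b - 1))) < d ^ h"
  shows "\<exists>P1 P2 P0. gadget_III V E b P1 P2 \<and>
           dpath V E P0 \<and> hd P0 = v \<and> last P0 = hd P1 \<and>
           set P0 \<inter> gadget_vertices P1 P2 = {hd P1} \<and>
           card (gadget_vertices P1 P2) \<le> (2 * h + 2) * (2 * b - 1) \<and>
           card (set P0) \<le> h * (2 * b - 1)"
proof -
  have "2 * b - 2 = (2 * b - 1) - 1" by simp
  then interpret L V E v b h d "2 * b - 1"
    using assms by unfold_locales (auto simp: digraph_def)
  show ?thesis using Goal_holds unfolding Goal_def .
qed

end
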